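(* Let $f\colon\mathbb{R}^n\to\mathbb{R}$ be a strictly convex quadratic function, $f(x)=\tfrac12x^TAx+b^Tx+c$ with $A$ symmetric positive definite, with unique minimizer $x^*$. Then the linesearch-free BFGS method, started from any $x_0\in\mathbb{R}^n$ and any symmetric positive definite $H_0$, generates iterates converging to $x^*$.
   Context: The unit-step BFGS update at a point $x$ with $g=\nabla f(x)\ne 0$ maps a symmetric positive definite $H$ to $H_+=VHV^T+\frac{ss^T}{s^Ty}$, where $s=-Hg$, $x_+=x+s$, $y=\nabla f(x_+)-g$, $V=I-\frac{sy^T}{s^Ty}$. The linesearch-free BFGS method: given the current iterate $x_k$ and matrix $H$, compute $s=-H\nabla f(x_k)$, replace $H$ by its unit-step BFGS update at $x_k$, and set $x_{k+1}=x_k+s$ if $f(x_k+s)<f(x_k)$, and $x_{k+1}=x_k$ otherwise; repeat. (If an iterate equals the minimizer, the gradient vanishes and the method stops there.) *)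

theory Defs
  imports "HOL-Analysis.Analysis"
begin

definition outer :: "real^'n \<Rightarrow> real^'n \<Rightarrow> real^'n^'n" where
  "outer u v = (\<chi> i j. u $ i * v $ j)"

definition bfgs_update ::
  "(real^'n \<Rightarrow> real^'n) \<Rightarrow> real^'n \<Rightarrow> real^'n^'n \<Rightarrow> real^'n^'n" where
  "bfgs_update grad x H =
     (let g = grad x; s = - (H *v g); y = grad (x + s) - g;
          V = mat 1 - (1 / (s \<bullet> y)) *\<^sub>R outer s y
      in V ** H ** transpose V + (1 / (s \<bullet> y)) *\<^sub>R outer s s)"

definition lf_bfgs_step ::
  "(real^'n \<Rightarrow> real) \<Rightarrow> (real^'n \<Rightarrow> real^'n) \<Rightarrow> (real^'n) \<times> (real^'n^'n) \<Rightarrow> (real^'n) \<times> (real^'n^'n)" where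
  "lf_bfgs_step f grad st =
     (let x = fst st; H = snd st; g = grad x; s = - (H *v g)
      in if g = 0 then st
         else ((if f (x + s) < f x then x + s else x), bfgs_update grad x H))"

primrec lf_bfgs ::
  "(real^'n \<Rightarrow> real) \<Rightarrow> (real^'n \<Rightarrow> real^'n) \<Rightarrow> real^'n \<Rightarrow> real^'n^'n \<Rightarrow> nat \<Rightarrow> (real^'n) \<times> (real^'n^'n)" where
  "lf_bfgs f grad x0 H0 0 = (x0, H0)"
| "lf_bfgs f grad x0 H0 (Suc k) = lf_bfgs_step f grad (lf_bfgs f grad x0 H0 k)"

end

theory Submission
  imports Defs
begin

lemma outer_mv: "outer u v *v w = (v \<bullet> w) *\<^sub>R u"
  by (simp add: outer_def vec_eq_iff matrix_vector_mult_def inner_vec_def sum_distrib_left mult_ac)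

lemma mult_outer: "M ** outer u v = outer (M *v u) v"
  by (simp add: outer_def vec_eq_iff matrix_matrix_mult_def matrix_vector_mult_def sum_distrib_right)
     (simp add: sum_distrib_left algebra_simps)

lemma outer_mult: "outer u v ** M = outer u (transpose M *v v)"
  by (simp add: outer_def vec_eq_iff matrix_matrix_mult_def matrix_vector_mult_def transpose_def)
     (simp add: sum_distrib_left algebra_simps)

lemma transpose_outer: "transpose (outer u v) = outer v u"
  by (simp add: outer_def vec_eq_iff transpose_def mult_ac)

lemma trace_outer: "trace (outer u v) = u \<bullet> v"
  by (simp add: outer_def trace_def inner_vec_def)

lemma outer_outer: "outer a b ** outer c d = (b \<bullet> c) *\<^sub>R outer a d"
  by (simp add: outer_def vec_eq_iff matrix_matrix_mult_def inner_vec_def sum_distrib_left sum_distrib_right mult_ac)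

lemma outer_scaleR_left: "outer (k *\<^sub>R u) v = k *\<^sub>R outer u v"
  by (simp add: outer_def vec_eq_iff mult_ac)
lemma outer_scaleR_right: "outer u (k *\<^sub>R v) = k *\<^sub>R outer u v"
  by (simp add: outer_def vec_eq_iff mult_ac)

lemma inner_mv_transpose: "x \<bullet> ((M::real^'n^'m) *v y) = (transpose M *v x) \<bullet> y"
  using dot_lmul_matrix[of x M y] by simp

lemma trace_scaleR: "trace (k *\<^sub>R M) = k * trace M"
  by (simp add: trace_def sum_distrib_left)

lemma mat_mult_scaleR_left: "(k *\<^sub>R (M::real^'n^'m)) ** (N::real^'p^'n) = k *\<^sub>R (M ** N)"
  by (simp add: vec_eq_iff matrix_matrix_mult_def sum_distrib_left mult_ac)
lemma mat_mult_scaleR_right: "(M::real^'n^'m) ** (k *\<^sub>R (N::real^'p^'n)) = k *\<^sub>R (M ** N)"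
  by (simp add: vec_eq_iff matrix_matrix_mult_def sum_distrib_left mult_ac)

lemma trace_self_nonneg: "transpose (E::real^'n^'n) = E \<Longrightarrow> trace (E ** E) \<ge> 0"
proof -
  assume "transpose E = E"
  then have "trace (E ** E) = trace (transpose E ** E)" by simp
  also have "\<dots> = (\<Sum>i\<in>UNIV. \<Sum>j\<in>UNIV. (E$j$i)^2)"
    by (simp add: trace_def matrix_matrix_mult_def transpose_def power2_eq_square)
  also have "\<dots> \<ge> 0" by (intro sum_nonneg) auto
  finally show ?thesis .
qed


lemma mm_add_r: "((A::real^'n^'m) + B) ** (C::real^'p^'n) = A ** C + B ** C"
  by (simp add: vec_eq_iff matrix_matrix_mult_def algebra_simps sum.distrib)
lemma mm_diff_r: "((A::real^'n^'m) - B) ** (C::real^'p^'n) = A ** C - B ** C"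
  by (simp add: vec_eq_iff matrix_matrix_mult_def algebra_simps sum_subtractf)
lemma mm_add_l: "(C::real^'n^'m) ** ((A::real^'p^'n) + B) = C ** A + C ** B"
  by (simp add: vec_eq_iff matrix_matrix_mult_def algebra_simps sum.distrib)
lemma mm_diff_l: "(C::real^'n^'m) ** ((A::real^'p^'n) - B) = C ** A - C ** B"
  by (simp add: vec_eq_iff matrix_matrix_mult_def algebra_simps sum_subtractf)
lemma transpose_add: "transpose ((A::real^'n^'m) + B) = transpose A + transpose B"
  by (simp add: vec_eq_iff transpose_def)
lemma transpose_diff: "transpose ((A::real^'n^'m) - B) = transpose A - transpose B"
  by (simp add: vec_eq_iff transpose_def)
lemma mv_add_mat: "((A::real^'n^'m) + B) *v x = A *v x + B *v x"
  by (simp add: algebra_simps)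
lemma mv_diff_mat: "((A::real^'n^'m) - B) *v x = A *v x - B *v x"
  by (simp add: algebra_simps)
lemma mv_scaleR_mat: "(k *\<^sub>R (A::real^'n^'m)) *v x = k *\<^sub>R (A *v x)"
  by (simp add: vec_eq_iff matrix_vector_mult_def sum_distrib_left mult_ac)

lemma mv_neg: "(A::real^'n^'m) *v (- x) = - (A *v x)"
  by (simp add: vec_eq_iff matrix_vector_mult_def sum_negf)

definition prj :: "real^'n \<Rightarrow> real^'n^'n" where
  "prj s = mat 1 - (1 / (s \<bullet> s)) *\<^sub>R outer s s"

definition tupd :: "real^'n^'n \<Rightarrow> real^'n \<Rightarrow> real^'n^'n" where
  "tupd T s = prj s ** T ** prj s + (1 / (s \<bullet> s)) *\<^sub>R outer s s"

lemma prj_mv: "prj s *v v = v - ((s \<bullet> v) / (s \<bullet> s)) *\<^sub>R s"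
  by (simp add: prj_def mv_diff_mat mv_scaleR_mat outer_mv)

lemma prj_sym: "transpose (prj s) = prj s"
  by (simp add: prj_def transpose_diff transpose_scalar transpose_outer)

lemma prj_idem: "s \<noteq> 0 \<Longrightarrow> prj s ** prj s = prj s"
  by (simp add: prj_def mm_diff_l mm_diff_r mat_mult_scaleR_left mat_mult_scaleR_right outer_outer
      algebra_simps)

lemma inner_prj: "v \<bullet> (prj s *v w) = (prj s *v v) \<bullet> w"
  using inner_mv_transpose[of v "prj s" w] by (simp add: prj_sym)

lemma tupd_sym: "transpose T = T \<Longrightarrow> transpose (tupd T s) = tupd T s"
  by (simp add: tupd_def transpose_add transpose_scalar transpose_outer matrix_transpose_mul prj_sym
      matrix_mul_assoc)

lemma tupd_quad: "v \<bullet> (tupd T s *v v) = (prj s *v v) \<bullet> (T *v (prj s *v v)) + (s \<bullet> v)^2 / (s \<bullet> s)"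
proof -
  have "tupd T s *v v = prj s *v (T *v (prj s *v v)) + ((1 / (s \<bullet> s)) * (s \<bullet> v)) *\<^sub>R s"
    by (simp add: tupd_def mv_add_mat mv_scaleR_mat outer_mv matrix_vector_mul_assoc matrix_mul_assoc)
  then show ?thesis
    by (simp add: inner_add_right inner_prj power2_eq_square inner_commute)
qed

lemma norm_split: "s \<noteq> 0 \<Longrightarrow> v \<bullet> v = (prj s *v v) \<bullet> (prj s *v v) + (s \<bullet> v)^2 / (s \<bullet> s)"
  by (simp add: prj_mv inner_diff_left inner_diff_right power2_eq_square inner_commute field_simps)

lemma tupd_mu:
  assumes "s \<noteq> 0" "\<mu> \<le> 1" "\<forall>v. \<mu> * (v \<bullet> v) \<le> v \<bullet> (T *v v)"
  shows "\<mu> * (v \<bullet> v) \<le> v \<bullet> (tupd T s *v v)"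
proof -
  have a: "\<mu> * ((prj s *v v) \<bullet> (prj s *v v)) \<le> (prj s *v v) \<bullet> (T *v (prj s *v v))"
    using assms(3) by blast
  have b: "\<mu> * ((s \<bullet> v)^2 / (s \<bullet> s)) \<le> (s \<bullet> v)^2 / (s \<bullet> s)"
    using mult_right_mono[OF assms(2), of "(s \<bullet> v)^2 / (s \<bullet> s)"] by simp
  show ?thesis using a b norm_split[OF assms(1), of v] tupd_quad[of v T s]
    by (simp add: distrib_left)
qed


lemma tupd_E: "s \<noteq> 0 \<Longrightarrow> tupd T s - mat 1 = prj s ** (T - mat 1) ** prj s"
proof -
  assume s: "s \<noteq> 0"
  have "prj s ** (T - mat 1) ** prj s = prj s ** T ** prj s - prj s"
    by (simp add: mm_diff_l mm_diff_r prj_idem[OF s])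
  moreover have "tupd T s - mat 1 = prj s ** T ** prj s - prj s"
    by (simp add: tupd_def prj_def algebra_simps)
  ultimately show ?thesis by simp
qed

lemma trace_frob:
  assumes E: "transpose E = E" and s: "s \<noteq> 0"
  shows "trace ((prj s ** E ** prj s) ** (prj s ** E ** prj s))
           \<le> trace (E ** E) - ((E *v s) \<bullet> (E *v s)) / (s \<bullet> s)"
proof -
  define P where "P = prj s"
  define a where "a = 1 / (s \<bullet> s)"
  have ss: "s \<bullet> s > 0" using s by simp
  have PP: "P ** P = P" using prj_idem[OF s] by (simp add: P_def)
  have "(P ** E ** P) ** (P ** E ** P) = P ** ((E ** (P ** P)) ** (E ** P))"
    by (simp add: matrix_mul_assoc)
  also have "\<dots> = P ** ((E ** P) ** (E ** P))" by (simp add: PP matrix_mul_assoc)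
  finally have "trace ((P ** E ** P) ** (P ** E ** P)) = trace (P ** ((E ** P) ** (E ** P)))"
    by simp
  also have "\<dots> = trace (((E ** P) ** (E ** P)) ** P)" by (rule trace_mul_sym)
  also have "((E ** P) ** (E ** P)) ** P = (E ** P) ** (E ** P)"
    by (simp add: PP flip: matrix_mul_assoc)
  finally have t1: "trace ((P ** E ** P) ** (P ** E ** P)) = trace ((E ** P) ** (E ** P))" .
  define w where "w = E *v s"
  have EP: "E ** P = E - a *\<^sub>R outer w s"
    by (simp add: P_def prj_def a_def w_def mm_diff_l mat_mult_scaleR_right mult_outer)
  have tr1: "trace (E ** outer w s) = w \<bullet> w"
    using inner_mv_transpose[of s E w]
    by (simp add: mult_outer trace_outer E w_def inner_commute)
  have tr2: "trace (outer w s ** E) = w \<bullet> w"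
    by (simp add: outer_mult trace_outer E w_def)
  have tr3: "trace (outer w s ** outer w s) = (s \<bullet> w) * (w \<bullet> s)"
    by (simp add: outer_outer trace_scaleR trace_outer)
  have "(E ** P) ** (E ** P) = E ** E - a *\<^sub>R (E ** outer w s) - a *\<^sub>R (outer w s ** E)
          + (a * a) *\<^sub>R (outer w s ** outer w s)"
    by (simp add: EP mm_diff_l mm_diff_r mat_mult_scaleR_right mat_mult_scaleR_left algebra_simps)
  then have t2: "trace ((E ** P) ** (E ** P)) = trace (E ** E) - 2 * a * (w \<bullet> w) + a * a * (s \<bullet> w)^2"
    by (simp add: trace_add trace_sub trace_scaleR tr1 tr2 tr3 inner_commute power2_eq_square)
  have cs: "(s \<bullet> w)^2 \<le> (s \<bullet> s) * (w \<bullet> w)"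
  proof -
    have "\<bar>s \<bullet> w\<bar> \<le> norm s * norm w" by (rule Cauchy_Schwarz_ineq2)
    then have "\<bar>s \<bullet> w\<bar>^2 \<le> (norm s * norm w)^2" by (rule power_mono) simp
    then have "(s \<bullet> w)^2 \<le> (norm s * norm w)^2" by simp
    then show ?thesis by (simp add: power_mult_distrib power2_norm_eq_inner)
  qed
  have "a * a * (s \<bullet> w)^2 \<le> a * (w \<bullet> w)"
  proof -
    have "a * a * (s \<bullet> w)^2 \<le> a * a * ((s \<bullet> s) * (w \<bullet> w))"
      using cs by (intro mult_left_mono) auto
    also have "\<dots> = a * (w \<bullet> w)" using ss by (simp add: a_def)
    finally show ?thesis .
  qed
  then show ?thesis using t1 t2 by (simp add: P_def a_def w_def)
qed


lemma tilde_conv: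
  fixes z :: "nat \<Rightarrow> real^'n" and T :: "nat \<Rightarrow> real^'n^'n"
  assumes sym0: "transpose (T 0) = T 0"
    and mu: "0 < \<mu>" "\<mu> \<le> 1" "\<forall>v. \<mu> * (v \<bullet> v) \<le> v \<bullet> (T 0 *v v)"
    and step: "\<And>k. z k \<noteq> 0 \<Longrightarrow> T (Suc k) = tupd (T k) (- (T k *v z k)) \<and>
        z (Suc k) = (if norm (z k - T k *v z k) < norm (z k) then z k - T k *v z k else z k)"
    and stop: "\<And>k. z k = 0 \<Longrightarrow> z (Suc k) = 0 \<and> T (Suc k) = T k"
  shows "z \<longlonglongrightarrow> 0"
proof -
  have inv: "transpose (T k) = T k \<and> (\<forall>v. \<mu> * (v \<bullet> v) \<le> v \<bullet> (T k *v v))" for k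
  proof (induction k)
    case 0 then show ?case using sym0 mu by blast
  next
    case (Suc k)
    show ?case
    proof (cases "z k = 0")
      case True then show ?thesis using stop Suc by simp
    next
      case False
      have sne: "- (T k *v z k) \<noteq> 0"
      proof
        assume "- (T k *v z k) = 0"
        then have "T k *v z k = 0" by (simp add: neg_equal_0_iff_equal)
        then have "\<mu> * (z k \<bullet> z k) \<le> 0" using Suc by (metis inner_zero_right)
        moreover have "z k \<bullet> z k > 0" using False by simp
        ultimately show False using mu(1) by (simp add: mult_le_0_iff)
      qed
      show ?thesis using step[OF False] Suc tupd_sym tupd_mu[OF sne mu(2)] by auto
    qed
  qed
  show ?thesis
  proof (cases "\<exists>k. z k = 0")
    case True
    then obtain k where k: "z k = 0" by blast
    have "z (k + j) = 0" for j
      by (induction j) (use k stop in auto)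
    then have "\<forall>\<^sub>F j in sequentially. z j = 0"
      unfolding eventually_sequentially by (metis le_add_diff_inverse)
    then show ?thesis by (simp add: tendsto_eventually)
  next
    case False
    then have zne: "z k \<noteq> 0" for k by blast
    define s where "s k = - (T k *v z k)" for k
    define E where "E k = T k - mat 1" for k
    define F where "F k = trace (E k ** E k)" for k
    define d where "d k = ((E k *v s k) \<bullet> (E k *v s k)) / (s k \<bullet> s k)" for k
    have Esym: "transpose (E k) = E k" for k using inv by (simp add: E_def transpose_diff)
    have sne: "s k \<noteq> 0" for k
    proof
      assume "s k = 0"
      then have "T k *v z k = 0" by (simp add: s_def neg_equal_0_iff_equal)
      then have "\<mu> * (z k \<bullet> z k) \<le> 0" using inv by (metis inner_zero_right)
      moreover have "z k \<bullet> z k > 0" using zne by simp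
      ultimately show False using mu(1) by (simp add: mult_le_0_iff)
    qed
    have Fdec: "F (Suc k) \<le> F k - d k" for k
    proof -
      have "E (Suc k) = prj (s k) ** E k ** prj (s k)"
        using step[OF zne] tupd_E[OF sne] by (simp add: E_def s_def)
      then show ?thesis using trace_frob[OF Esym sne] by (simp add: F_def d_def)
    qed
    have dnn: "d k \<ge> 0" for k by (simp add: d_def)
    have Fnn: "F k \<ge> 0" for k using trace_self_nonneg[OF Esym] by (simp add: F_def)
    have psum: "(\<Sum>k<K. d k) \<le> F 0 - F K" for K
    proof (induction K)
      case 0 then show ?case by simp
    next
      case (Suc K) then show ?case using Fdec[of K] by simp
    qed
    have pb: "sum d {..<n} \<le> F 0" for n using psum[of n] Fnn[of n] by linarith
    have "summable d"
      by (rule summableI_nonneg_bounded[where x="F 0"]) (use dnn pb in auto)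
    then have "d \<longlonglongrightarrow> 0" by (rule summable_LIMSEQ_zero)
    moreover have "(\<mu>/4)^2 > 0" using mu by simp
    ultimately have "\<forall>\<^sub>F k in sequentially. d k < (\<mu>/4)^2"
      by (simp add: order_tendstoD(2))
    then obtain K where K: "\<And>k. k \<ge> K \<Longrightarrow> d k < (\<mu>/4)^2"
      unfolding eventually_sequentially by blast
    have contr: "norm (z (Suc k)) \<le> norm (z k) / 3" if kK: "k \<ge> K" for k
    proof -
      define r where "r = z k + s k"
      define w where "w = E k *v s k"
      have "w \<bullet> w < (\<mu>/4)^2 * (s k \<bullet> s k)"
        using K[OF kK] sne[of k] by (simp add: d_def w_def field_simps)
      moreover have "((\<mu>/4) * norm (s k))^2 = (\<mu>/4)^2 * (s k \<bullet> s k)"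
        by (simp only: power_mult_distrib power2_norm_eq_inner)
      ultimately have "(norm w)^2 \<le> ((\<mu>/4) * norm (s k))^2"
        by (simp only: power2_norm_eq_inner)
      then have nw: "norm w \<le> (\<mu>/4) * norm (s k)"
        by (rule power2_le_imp_le) (use mu in simp)
      have Tr: "T k *v r = w"
        by (simp add: r_def w_def s_def E_def matrix_vector_right_distrib mv_diff_mat mv_neg matrix_vector_mult_diff_distrib)
      have "\<mu> * (norm r)^2 \<le> r \<bullet> w"
        using inv[of k] Tr by (metis power2_norm_eq_inner)
      also have "\<dots> \<le> norm r * norm w" by (rule norm_cauchy_schwarz)
      also have "\<dots> \<le> norm r * ((\<mu>/4) * norm (s k))" using nw by (intro mult_left_mono) auto
      finally have a: "\<mu> * (norm r)^2 \<le> norm r * ((\<mu>/4) * norm (s k))" .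
      have rs: "norm r \<le> norm (s k) / 4"
      proof (cases "norm r = 0")
        case True then show ?thesis by simp
      next
        case False
        then have "norm r > 0" by simp
        have "norm r * (\<mu> * norm r) = \<mu> * (norm r)^2" by (simp add: power2_eq_square)
        with a have "norm r * (\<mu> * norm r) \<le> norm r * ((\<mu>/4) * norm (s k))" by linarith
        with \<open>norm r > 0\<close> have "\<mu> * norm r \<le> (\<mu>/4) * norm (s k)"
          by (simp only: mult_le_cancel_left_pos)
        then show ?thesis using mu(1) by (simp add: field_simps)
      qed
      have "norm (s k) \<le> norm r + norm (z k)"
        using norm_triangle_ineq4[of r "z k"] by (simp add: r_def)
      with rs have r3: "norm r \<le> norm (z k) / 3" by simp
      have "norm (z k) > 0" using zne[of k] by simp
      then have "norm r < norm (z k)" using r3 by linarith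
      then have "z (Suc k) = r"
        using step[OF zne[of k]] by (simp add: r_def s_def)
      then show ?thesis using r3 by simp
    qed
    have geo: "norm (z (K + j)) \<le> norm (z K) * (1/3)^j" for j
    proof (induction j)
      case 0 then show ?case by simp
    next
      case (Suc j)
      have "norm (z (K + Suc j)) \<le> norm (z (K + j)) / 3" using contr[of "K + j"] by simp
      also have "\<dots> \<le> norm (z K) * (1/3)^j / 3" using Suc by simp
      finally show ?case by simp
    qed
    have "\<forall>\<^sub>F k in sequentially. norm (z k) \<le> norm (z K) * 3^K * (1/3)^k"
      unfolding eventually_sequentially
    proof (intro exI allI impI)
      fix k assume "K \<le> k"
      then obtain j where j: "k = K + j" by (metis le_add_diff_inverse)
      have eq: "norm (z K) * 3^K * (1/3)^(K+j) = norm (z K) * (1/3)^j"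
        by (simp add: power_add power_one_over)
      show "norm (z k) \<le> norm (z K) * 3^K * (1/3)^k" unfolding j eq using geo[of j] .
    qed
    moreover have "(\<lambda>k. norm (z K) * 3^K * (1/3::real)^k) \<longlonglongrightarrow> 0"
      by (intro tendsto_mult_right_zero LIMSEQ_power_zero) simp
    ultimately show ?thesis by (rule Lim_null_comparison)
  qed
qed

lemma mv_axis: "(M::real^'n^'m) *v axis q 1 = (\<chi> p. M$p$q)"
  by (simp add: vec_eq_iff matrix_vector_mult_def axis_def if_distrib if_distribR cong: if_cong)

lemma axis_M_axis: "axis p 1 \<bullet> ((M::real^'n^'n) *v axis q 1) = M$p$q"
  by (simp add: mv_axis inner_axis')

lemma inner_axis_mv: "axis p 1 \<bullet> ((M::real^'n^'n) *v v) = (M *v v)$p"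
  by (simp add: inner_axis')

lemma quad_expand:
  assumes "transpose (M::real^'n^'n) = M"
  shows "(x + y) \<bullet> (M *v (x + y)) = x \<bullet> (M *v x) + 2 * (x \<bullet> (M *v y)) + y \<bullet> (M *v y)"
proof -
  have "y \<bullet> (M *v x) = x \<bullet> (M *v y)"
    using inner_mv_transpose[of y M x] assms by (simp add: inner_commute)
  then show ?thesis by (simp add: matrix_vector_right_distrib inner_add_left inner_add_right)
qed

lemma psd_cs:
  assumes sym: "transpose (M::real^'n^'n) = M" and psd: "\<forall>v. v \<bullet> (M *v v) \<ge> 0"
    and pos: "M$i$i > 0"
  shows "((M *v v)$i)^2 / M$i$i \<le> v \<bullet> (M *v v)"
proof -
  define t where "t = (M *v v)$i / M$i$i"
  have "0 \<le> (v + (-t) *\<^sub>R axis i 1) \<bullet> (M *v (v + (-t) *\<^sub>R axis i 1))" using psd by blast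
  also have "\<dots> = v \<bullet> (M *v v) - 2 * t * (M *v v)$i + t * t * M$i$i"
    using quad_expand[OF sym, of v "(-t) *\<^sub>R axis i 1"] axis_M_axis[of i M i]
      inner_mv_transpose[of v M "axis i 1"] sym
    by (simp add: matrix_vector_mult_scaleR mv_neg inner_axis inner_axis_mv inner_commute)
  also have "\<dots> = v \<bullet> (M *v v) - ((M *v v)$i)^2 / M$i$i"
    using pos by (simp add: t_def field_simps power2_eq_square)
  finally show ?thesis by simp
qed

lemma psd_zero_diag:
  assumes sym: "transpose (M::real^'n^'n) = M" and psd: "\<forall>v. v \<bullet> (M *v v) \<ge> 0"
    and z: "M$j$j = 0"
  shows "M$i$j = 0"
proof -
  define m where "m = M$i$i"
  define x where "x = M$i$j"
  have m0: "m \<ge> 0" using psd[rule_format, of "axis i 1"] by (simp add: axis_M_axis m_def)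
  define t where "t = x / (m + 1)"
  have Mji: "M$j$i = x" using sym by (metis transpose_def vec_lambda_beta x_def)
  have "0 \<le> (axis j 1 + (-t) *\<^sub>R axis i 1) \<bullet> (M *v (axis j 1 + (-t) *\<^sub>R axis i 1))"
    using psd by blast
  also have "\<dots> = - 2 * t * x + t * t * m"
    using quad_expand[OF sym, of "axis j 1" "(-t) *\<^sub>R axis i 1"]
    by (simp add: matrix_vector_mult_scaleR mv_neg axis_M_axis z Mji m_def)
  finally have a: "0 \<le> - 2 * t * x + t * t * m" .
  have h1: "m + 1 \<noteq> 0" using m0 by simp
  have tx: "x = t * (m + 1)" using h1 by (simp add: t_def)
  have e: "(- 2 * t * x + t * t * m) * ((m + 1) * (m + 1)) = - (x * x) * (m + 2)"
    unfolding tx by algebra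
  have "0 \<le> (- 2 * t * x + t * t * m) * ((m + 1) * (m + 1))" using a by simp
  then have "0 \<le> - (x * x) * (m + 2)" unfolding e .
  then have "x * x * (m + 2) \<le> 0" by (simp only: mult_minus_left neg_0_le_iff_le)
  moreover have "m + 2 > 0" using m0 by simp
  ultimately have "x * x \<le> 0" by (simp add: mult_le_0_iff)
  then have "x = 0" by (metis mult_eq_0_iff antisym zero_le_square)
  then show ?thesis by (simp add: x_def)
qed


lemma psd_factor_aux:
  fixes M :: "real^'n^'n"
  assumes "card {i. M$i$i \<noteq> 0} = N" "transpose M = M" "\<forall>v. v \<bullet> (M *v v) \<ge> 0"
  shows "\<exists>C::real^'n^'n. M = C ** transpose C \<and> (\<forall>j. M$j$j = 0 \<longrightarrow> (\<forall>a. C$a$j = 0))"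
  using assms
proof (induction N arbitrary: M rule: less_induct)
  case (less N M)
  note sym = less.prems(2) and psd = less.prems(3)
  have Msym: "M$a$b = M$b$a" for a b using sym by (metis transpose_def vec_lambda_beta)
  show ?case
  proof (cases "\<forall>i. M$i$i = 0")
    case True
    then have "M = 0"
      using psd_zero_diag[OF sym psd] by (simp add: vec_eq_iff)
    then show ?thesis by (intro exI[of _ 0]) (simp add: vec_eq_iff matrix_matrix_mult_def)
  next
    case False
    then obtain i where "M$i$i \<noteq> 0" by blast
    moreover have "M$i$i \<ge> 0" using psd[rule_format, of "axis i 1"] by (simp add: axis_M_axis)
    ultimately have mpos: "M$i$i > 0" by simp
    define m where "m = M$i$i"
    define c where "c = (\<chi> k. M$k$i)"
    define M' where "M' = M - (1/m) *\<^sub>R outer c c"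
    have M'e: "M'$a$b = M$a$b - c$a * c$b / m" for a b
      by (simp add: M'_def outer_def)
    have sym': "transpose M' = M'"
      by (simp add: M'_def transpose_diff transpose_scalar transpose_outer sym)
    have cv: "c \<bullet> v = (M *v v)$i" for v
      by (simp add: c_def inner_vec_def matrix_vector_mult_def Msym mult_ac)
    have psd': "\<forall>v. v \<bullet> (M' *v v) \<ge> 0"
    proof
      fix v
      have "v \<bullet> (M' *v v) = v \<bullet> (M *v v) - ((M *v v)$i)^2 / m"
        by (simp add: M'_def mv_diff_mat mv_scaleR_mat outer_mv inner_diff_right cv
            power2_eq_square inner_commute)
      then show "v \<bullet> (M' *v v) \<ge> 0" using psd_cs[OF sym psd mpos, of v] by (simp add: m_def)
    qed
    have cz: "M$j$j = 0 \<Longrightarrow> c$j = 0" for j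
      using psd_zero_diag[OF sym psd, of j i] Msym by (simp add: c_def)
    have sub: "{j. M'$j$j \<noteq> 0} \<subseteq> {j. M$j$j \<noteq> 0} - {i}"
    proof
      fix j assume "j \<in> {j. M'$j$j \<noteq> 0}"
      then have j: "M'$j$j \<noteq> 0" by simp
      have "M$j$j \<noteq> 0" using j cz[of j] by (auto simp: M'e)
      moreover have "j \<noteq> i"
        using j mpos by (auto simp: M'e c_def m_def power2_eq_square)
      ultimately show "j \<in> {j. M$j$j \<noteq> 0} - {i}" by simp
    qed
    have "card {j. M'$j$j \<noteq> 0} < N"
    proof -
      have "card {j. M'$j$j \<noteq> 0} \<le> card ({j. M$j$j \<noteq> 0} - {i})"
        by (rule card_mono[OF _ sub]) simp
      also have "\<dots> < card {j. M$j$j \<noteq> 0}"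
        using mpos by (intro card_Diff1_less) auto
      finally show ?thesis using less.prems(1) by simp
    qed
    from less.IH[OF this refl sym' psd'] obtain C' where
      C': "M' = C' ** transpose C'" "\<forall>j. M'$j$j = 0 \<longrightarrow> (\<forall>a. C'$a$j = 0)" by blast
    have C'i: "C'$a$i = 0" for a
      using C'(2) mpos by (simp add: M'e c_def m_def)
    define C where "C = (\<chi> a b. if b = i then c$a / sqrt m else C'$a$b)"
    have "M = C ** transpose C"
    proof -
      have "(C ** transpose C)$a$b = M$a$b" for a b
      proof -
        have "(C ** transpose C)$a$b = (\<Sum>k\<in>UNIV. C'$a$k * C'$b$k + (if k = i then c$a * c$b / m else 0))"
          using mpos
          by (auto simp: matrix_matrix_mult_def transpose_def C_def C'i m_def intro!: sum.cong
              simp del: real_sqrt_gt_0_iff)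
        also have "\<dots> = (\<Sum>k\<in>UNIV. C'$a$k * C'$b$k) + c$a * c$b / m"
          by (simp add: sum.distrib)
        also have "(\<Sum>k\<in>UNIV. C'$a$k * C'$b$k) = M'$a$b"
          by (simp add: C'(1) matrix_matrix_mult_def transpose_def)
        finally show ?thesis by (simp add: M'e)
      qed
      then show ?thesis by (simp add: vec_eq_iff)
    qed
    moreover have "\<forall>j. M$j$j = 0 \<longrightarrow> (\<forall>a. C$a$j = 0)"
    proof (intro allI impI)
      fix j a assume j: "M$j$j = 0"
      then have "j \<noteq> i" using mpos by auto
      moreover have "M'$j$j = 0" using j cz[of j] by (simp add: M'e)
      ultimately show "C$a$j = 0" using C'(2) by (simp add: C_def)
    qed
    ultimately show ?thesis by blast
  qed
qed

lemma psd_factor: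
  fixes M :: "real^'n^'n"
  assumes "transpose M = M" "\<forall>v. v \<bullet> (M *v v) \<ge> 0"
  shows "\<exists>C::real^'n^'n. M = C ** transpose C"
  using psd_factor_aux[OF refl assms] by blast


lemma pd_lower:
  fixes M :: "real^'n^'n"
  assumes pd: "\<forall>v. v \<noteq> 0 \<longrightarrow> v \<bullet> (M *v v) > 0"
  shows "\<exists>\<mu>>0. \<forall>v. \<mu> * (v \<bullet> v) \<le> v \<bullet> (M *v v)"
proof -
  define q where "q v = v \<bullet> (M *v v)" for v :: "real^'n"
  have cont: "continuous_on (sphere 0 1) q"
    unfolding q_def
    by (intro continuous_on_inner continuous_on_id
        linear_continuous_on matrix_vector_mul_bounded_linear)
  have ne: "sphere (0::real^'n) 1 \<noteq> {}"
  proof -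
    obtain i :: 'n where True by simp
    have "axis i (1::real) \<in> sphere 0 1" by simp
    then show ?thesis by blast
  qed
  obtain u where u: "u \<in> sphere 0 1" "\<forall>w\<in>sphere 0 1. q u \<le> q w"
    using continuous_attains_inf[OF compact_sphere ne cont] by blast
  have "u \<noteq> 0" using u(1) by auto
  then have upos: "q u > 0" using pd by (simp add: q_def)
  have "q u * (v \<bullet> v) \<le> v \<bullet> (M *v v)" for v
  proof (cases "v = 0")
    case True then show ?thesis by simp
  next
    case False
    define w where "w = (1 / norm v) *\<^sub>R v"
    have "w \<in> sphere 0 1" using False by (simp add: w_def)
    then have "q u \<le> q w" using u(2) by blast
    also have "q w = (v \<bullet> (M *v v)) / (norm v)^2"
      by (simp add: q_def w_def matrix_vector_mult_scaleR power2_eq_square)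
    finally have "q u \<le> (v \<bullet> (M *v v)) / (norm v)^2" .
    moreover have "(norm v)^2 > 0" using False by simp
    ultimately have "q u * (norm v)^2 \<le> v \<bullet> (M *v v)" by (simp add: field_simps)
    then show ?thesis by (simp add: power2_norm_eq_inner)
  qed
  then show ?thesis using upos by blast
qed

lemma grad_formula:
  fixes A :: "real^'n^'n" and b :: "real^'n" and c :: real
    and f :: "real^'n \<Rightarrow> real" and grad :: "real^'n \<Rightarrow> real^'n"
  assumes A_sym: "transpose A = A"
    and f_def: "\<forall>x. f x = (1/2) * (x \<bullet> (A *v x)) + b \<bullet> x + c"
    and grad_f: "\<forall>x. GDERIV f x :> grad x"
  shows "grad x = A *v x + b"
proof -
  have fe: "f = (\<lambda>x. (1/2) * (x \<bullet> (A *v x)) + b \<bullet> x + c)" using f_def by auto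
  have d: "(f has_derivative (\<lambda>h. (1/2) * (x \<bullet> (A *v h) + h \<bullet> (A *v x)) + b \<bullet> h)) (at x)"
    unfolding fe
    by (auto intro!: derivative_eq_intros bounded_linear_imp_has_derivative
        matrix_vector_mul_bounded_linear)
  have "(\<lambda>h. (1/2) * (x \<bullet> (A *v h) + h \<bullet> (A *v x)) + b \<bullet> h) = (\<lambda>h. h \<bullet> (A *v x + b))"
  proof
    fix h
    have "x \<bullet> (A *v h) = h \<bullet> (A *v x)"
      using inner_mv_transpose[of x A h] A_sym by (simp add: inner_commute)
    then show "(1/2) * (x \<bullet> (A *v h) + h \<bullet> (A *v x)) + b \<bullet> h = h \<bullet> (A *v x + b)"
      by (simp add: inner_add_right inner_commute)
  qed
  with d have d2: "(f has_derivative (\<lambda>h. h \<bullet> (A *v x + b))) (at x)" by simp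
  have "(f has_derivative (\<lambda>h. h \<bullet> grad x)) (at x)" using grad_f by (simp add: gderiv_def)
  from has_derivative_unique[OF this d2]
  have hh: "\<And>h. h \<bullet> grad x = h \<bullet> (A *v x + b)" by meson
  have "(grad x - (A *v x + b)) \<bullet> (grad x - (A *v x + b)) = 0"
    using hh[of "grad x - (A *v x + b)"] by (simp only: inner_diff_right)
  then show ?thesis by simp
qed


declare transpose_matrix_vector[simp del]

theorem mainTheorem5:
  fixes A :: "real^'n^'n" and b :: "real^'n" and c :: real
    and f :: "real^'n \<Rightarrow> real" and grad :: "real^'n \<Rightarrow> real^'n"
    and xstar x0 :: "real^'n" and H0 :: "real^'n^'n"
  assumes A_sym: "transpose A = A"
    and A_pd: "\<forall>v. v \<noteq> 0 \<longrightarrow> v \<bullet> (A *v v) > 0"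
    and f_def: "\<forall>x. f x = (1/2) * (x \<bullet> (A *v x)) + b \<bullet> x + c"
    and grad_f: "\<forall>x. GDERIV f x :> grad x"
    and xstar_min: "\<forall>x. f xstar \<le> f x"
    and H0_sym: "transpose H0 = H0"
    and H0_pd: "\<forall>v. v \<noteq> 0 \<longrightarrow> v \<bullet> (H0 *v v) > 0"
  shows "(\<lambda>k. fst (lf_bfgs f grad x0 H0 k)) \<longlonglongrightarrow> xstar"
proof -
  have gr: "grad x = A *v x + b" for x using grad_formula[OF A_sym f_def grad_f] .
  have gstar: "A *v xstar + b = 0"
  proof -
    have "(f has_derivative (\<lambda>h. h \<bullet> grad xstar)) (at xstar)"
      using grad_f by (simp add: gderiv_def)
    from has_derivative_local_min[OF this] have "(\<lambda>h. h \<bullet> grad xstar) = (\<lambda>h. 0)"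
      using xstar_min by simp
    then have "grad xstar \<bullet> grad xstar = 0" by meson
    then show ?thesis using gr by simp
  qed
  have bdef: "b = - (A *v xstar)" using gstar by (metis add.commute eq_neg_iff_add_eq_0)
  have grad_e: "grad x = A *v (x - xstar)" for x
    by (simp add: gr bdef matrix_vector_mult_diff_distrib)
  have psdA: "\<forall>v. v \<bullet> (A *v v) \<ge> 0"
    using A_pd by (metis inner_zero_left less_eq_real_def matrix_vector_mult_0_right)
  obtain C :: "real^'n^'n" where AC: "A = C ** transpose C" using psd_factor[OF A_sym psdA] by blast
  have Av: "A *v v = C *v (transpose C *v v)" for v by (simp only: AC matrix_vector_mul_assoc)
  have quadA: "v \<bullet> (A *v v) = (transpose C *v v) \<bullet> (transpose C *v v)" for v
    using inner_mv_transpose[of v C "transpose C *v v"] by (simp add: Av)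
  have injCT: "inj ((*v) (transpose C))"
  proof (rule linear_injective_0[THEN iffD2])
    show "linear ((*v) (transpose C))" by simp
    show "\<forall>v. transpose C *v v = 0 \<longrightarrow> v = 0"
    proof (intro allI impI)
      fix v assume "transpose C *v v = 0"
      then have "v \<bullet> (A *v v) = 0" by (simp only: quadA) simp
      then show "v = 0" using A_pd by (metis less_irrefl)
    qed
  qed
  obtain B :: "real^'n^'n" where B: "B ** transpose C = mat 1"
    using matrix_left_invertible_injective[THEN iffD2, OF injCT] by blast
  have BC: "transpose C ** B = mat 1" using B matrix_left_right_inverse by blast
  have Cinj: "C *v v = 0 \<Longrightarrow> v = 0" for v
  proof -
    assume "C *v v = 0"
    have "transpose (transpose C ** B) = mat 1" using BC by simp
    then have "transpose B ** C = mat 1" by (simp add: matrix_transpose_mul)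
    then have "v = transpose B *v (C *v v)" by (simp add: matrix_vector_mul_assoc)
    then show "v = 0" using \<open>C *v v = 0\<close> by simp
  qed
  define X where "X k = lf_bfgs f grad x0 H0 k" for k
  define z where "z k = transpose C *v (fst (X k) - xstar)" for k
  define T where "T k = transpose C ** snd (X k) ** C" for k
  have Bz: "fst (X k) = xstar + B *v z k" for k
    by (simp add: z_def matrix_vector_mul_assoc B)
  have gz: "grad (fst (X k)) = C *v z k" for k by (simp add: grad_e Av z_def)
  have fval: "f y < f x \<longleftrightarrow> norm (transpose C *v (y - xstar)) < norm (transpose C *v (x - xstar))"
    for x y
  proof -
    have fe: "f x = f xstar + (1/2) * ((x - xstar) \<bullet> (A *v (x - xstar)))" for x
    proof -
      have s1: "xstar \<bullet> (A *v x) = x \<bullet> (A *v xstar)"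
        using inner_mv_transpose[of xstar A x] A_sym by (simp add: inner_commute)
      have fx: "f x = (1/2) * (x \<bullet> (A *v x)) - x \<bullet> (A *v xstar) + c"
        using f_def bdef by (simp add: inner_commute)
      have fs: "f xstar = (1/2) * (xstar \<bullet> (A *v xstar)) - xstar \<bullet> (A *v xstar) + c"
        using f_def bdef by (simp add: inner_commute)
      have q: "(x - xstar) \<bullet> (A *v (x - xstar))
          = x \<bullet> (A *v x) - 2 * (x \<bullet> (A *v xstar)) + xstar \<bullet> (A *v xstar)"
        using s1 by (simp add: matrix_vector_mult_diff_distrib inner_diff_left inner_diff_right)
      show ?thesis using fx fs q by linarith
    qed
    have "f y < f x \<longleftrightarrow> (y - xstar) \<bullet> (A *v (y - xstar)) < (x - xstar) \<bullet> (A *v (x - xstar))"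
      using fe[of x] fe[of y] by simp
    also have "\<dots> \<longleftrightarrow> (norm (transpose C *v (y - xstar)))^2 < (norm (transpose C *v (x - xstar)))^2"
      by (simp add: quadA power2_norm_eq_inner)
    also have "\<dots> \<longleftrightarrow> norm (transpose C *v (y - xstar)) < norm (transpose C *v (x - xstar))"
      by (auto intro: power_strict_mono power2_less_imp_less)
    finally show ?thesis .
  qed
  have stop: "z (Suc k) = 0 \<and> T (Suc k) = T k" if zk: "z k = 0" for k
  proof -
    have "grad (fst (X k)) = 0" using gz zk by simp
    then have "X (Suc k) = X k" by (simp add: X_def lf_bfgs_step_def Let_def)
    then show ?thesis using zk by (simp add: z_def T_def)
  qed
  have step: "T (Suc k) = tupd (T k) (- (T k *v z k)) \<and>
        z (Suc k) = (if norm (z k - T k *v z k) < norm (z k) then z k - T k *v z k else z k)"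
    if zk: "z k \<noteq> 0" for k
  proof -
    define x where "x = fst (X k)"
    define H where "H = snd (X k)"
    define g where "g = grad x"
    define s where "s = - (H *v g)"
    define st where "st = - (T k *v z k)"
    have gne: "g \<noteq> 0" using gz[of k] zk Cinj by (auto simp: g_def x_def)
    have CTs: "transpose C *v s = st"
      by (simp add: s_def st_def g_def x_def gz T_def H_def mv_neg matrix_vector_mul_assoc matrix_mul_assoc)
    have y: "grad (x + s) - g = C *v st"
    proof -
      have "grad (x + s) - g = A *v ((x + s - xstar) - (x - xstar))"
        by (simp only: g_def grad_e matrix_vector_mult_diff_distrib)
      also have "(x + s - xstar) - (x - xstar) = s" by simp
      finally show ?thesis by (simp add: Av CTs)
    qed
    have sy: "s \<bullet> (C *v st) = st \<bullet> st"
      using inner_mv_transpose[of s C st] by (simp add: CTs)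
    have Xs: "X (Suc k) = ((if f (x + s) < f x then x + s else x), bfgs_update grad x H)"
      using gne by (simp add: X_def x_def H_def g_def s_def lf_bfgs_step_def Let_def)
    define a where "a = 1 / (st \<bullet> st)"
    define V where "V = mat 1 - a *\<^sub>R outer s (C *v st)"
    have upd: "bfgs_update grad x H = V ** H ** transpose V + a *\<^sub>R outer s s"
      unfolding bfgs_update_def Let_def g_def[symmetric] s_def[symmetric] y sy V_def a_def by (rule refl)
    have CV: "transpose C ** V = prj st ** transpose C"
    proof -
      have "transpose C ** V = transpose C - a *\<^sub>R outer st (C *v st)"
        by (simp add: V_def mm_diff_l mat_mult_scaleR_right mult_outer CTs)
      also have "outer st (C *v st) = outer st st ** transpose C"
        by (simp add: outer_mult)
      finally show ?thesis
        by (simp add: prj_def a_def mm_diff_r mat_mult_scaleR_left)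
    qed
    have VC: "transpose V ** C = C ** prj st"
    proof -
      have "transpose (transpose C ** V) = transpose (prj st ** transpose C)" using CV by simp
      then show ?thesis by (simp add: matrix_transpose_mul prj_sym)
    qed
    have "T (Suc k) = transpose C ** (V ** H ** transpose V + a *\<^sub>R outer s s) ** C"
      by (simp add: T_def Xs upd)
    also have "\<dots> = (transpose C ** V) ** H ** (transpose V ** C) + a *\<^sub>R outer st st"
      by (simp add: mm_add_l mm_add_r mat_mult_scaleR_left mat_mult_scaleR_right mult_outer
          outer_mult CTs matrix_mul_assoc)
    also have "\<dots> = tupd (T k) st"
      by (simp add: CV VC tupd_def T_def H_def a_def matrix_mul_assoc)
    finally have T1: "T (Suc k) = tupd (T k) st" .
    have zx: "transpose C *v (x - xstar) = z k" by (simp add: z_def x_def)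
    have zxs: "transpose C *v (x + s - xstar) = z k - T k *v z k"
    proof -
      have "x + s - xstar = (x - xstar) + s" by simp
      then have "transpose C *v (x + s - xstar) = transpose C *v ((x - xstar) + s)" by (rule arg_cong)
      also have "\<dots> = z k + st" by (simp only: matrix_vector_right_distrib zx CTs)
      also have "\<dots> = z k - T k *v z k" by (simp add: st_def)
      finally show ?thesis .
    qed
    have "z (Suc k) = transpose C *v (fst (X (Suc k)) - xstar)" by (simp only: z_def)
    also have "\<dots> = (if f (x + s) < f x then transpose C *v (x + s - xstar)
                        else transpose C *v (x - xstar))" by (simp add: Xs)
    also have "\<dots> = (if f (x + s) < f x then z k - T k *v z k else z k)" by (simp only: zxs zx)
    finally have zS: "z (Suc k) = (if f (x + s) < f x then z k - T k *v z k else z k)" .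
    show ?thesis using zS T1 fval[of "x + s" x] by (simp only: st_def zxs zx)
  qed
  have sym0: "transpose (T 0) = T 0"
    by (simp add: T_def X_def H0_sym matrix_transpose_mul matrix_mul_assoc)
  have pd0: "\<forall>v. v \<noteq> 0 \<longrightarrow> v \<bullet> (T 0 *v v) > 0"
  proof (intro allI impI)
    fix v :: "real^'n" assume "v \<noteq> 0"
    then have "C *v v \<noteq> 0" using Cinj by blast
    then have "(C *v v) \<bullet> (H0 *v (C *v v)) > 0" using H0_pd by blast
    moreover have "v \<bullet> (T 0 *v v) = (C *v v) \<bullet> (H0 *v (C *v v))"
      using inner_mv_transpose[of v "transpose C" "H0 *v (C *v v)"]
      by (simp add: T_def X_def matrix_vector_mul_assoc[symmetric])
    ultimately show "v \<bullet> (T 0 *v v) > 0" by simp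
  qed
  obtain \<mu>0 where mu0: "\<mu>0 > 0" "\<forall>v. \<mu>0 * (v \<bullet> v) \<le> v \<bullet> (T 0 *v v)"
    using pd_lower[OF pd0] by blast
  define \<mu> where "\<mu> = min \<mu>0 1"
  have mu: "0 < \<mu>" "\<mu> \<le> 1" "\<forall>v. \<mu> * (v \<bullet> v) \<le> v \<bullet> (T 0 *v v)"
  proof -
    show "0 < \<mu>" "\<mu> \<le> 1" using mu0 by (auto simp: \<mu>_def)
    show "\<forall>v. \<mu> * (v \<bullet> v) \<le> v \<bullet> (T 0 *v v)"
    proof
      fix v :: "real^'n"
      have "\<mu> * (v \<bullet> v) \<le> \<mu>0 * (v \<bullet> v)"
        by (intro mult_right_mono) (auto simp: \<mu>_def)
      then show "\<mu> * (v \<bullet> v) \<le> v \<bullet> (T 0 *v v)" using mu0(2) by (meson order_trans)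
    qed
  qed
  have "z \<longlonglongrightarrow> 0"
    by (rule tilde_conv[OF sym0 mu step stop]) auto
  then have "(\<lambda>k. xstar + B *v z k) \<longlonglongrightarrow> xstar + B *v 0"
    by (intro tendsto_intros bounded_linear.tendsto[OF matrix_vector_mul_bounded_linear])
  then show ?thesis using Bz by (simp add: X_def)
qed

end
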